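(* Let $a,b,c,e$ be positive integers with $e\leqslant c$. If there exists an $\mathrm{IHS}(a,be;c)$, then there exists an integer Heffter array $\mathrm{H}(ac,bc;be,ae)$.
   Context: An integer Heffter array set $\mathrm{IHS}(m,n;c)$ is a collection of $c$ completely filled $m\times n$ arrays with integer entries such that the absolute values of all $mnc$ entries (taken over all $c$ arrays) are exactly $1,2,\ldots,mnc$, each occurring exactly once, and in every array the entries of each row and of each column sum to $0$. An integer Heffter array $\mathrm{H}(m,n;s,k)$ is an $m\times n$ partially filled array whose entries are integers from $\{\pm1,\ldots,\pm nk\}$ such that each row contains exactly $s$ filled cells, each column contains exactly $k$ filled cells, no two entries have the same absolute value, and the entries of every row and every column sum to $0$. *)

theory Defs
  imports Main
begin

definition IHS :: "nat \<Rightarrow> nat \<Rightarrow> nat \<Rightarrow> (nat \<Rightarrow> nat \<Rightarrow> nat \<Rightarrow> int) \<Rightarrow> bool" where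
  "IHS m n c A \<longleftrightarrow>
     bij_betw (\<lambda>(t, i, j). \<bar>A t i j\<bar>) ({..<c} \<times> {..<m} \<times> {..<n}) (int ` {1..m*n*c})
   \<and> (\<forall>t<c. \<forall>i<m. (\<Sum>j<n. A t i j) = 0)
   \<and> (\<forall>t<c. \<forall>j<n. (\<Sum>i<m. A t i j) = 0)"

definition cellval :: "int option \<Rightarrow> int" where
  "cellval x = (case x of None \<Rightarrow> 0 | Some v \<Rightarrow> v)"

text \<open>An integer Heffter array H(m,n;s,k): partially filled m x n array,
  H i j = None meaning the cell is empty.\<close>
definition Heffter :: "nat \<Rightarrow> nat \<Rightarrow> nat \<Rightarrow> nat \<Rightarrow> (nat \<Rightarrow> nat \<Rightarrow> int option) \<Rightarrow> bool" where
  "Heffter m n s k H \<longleftrightarrow>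
     (\<forall>i<m. \<forall>j<n. \<forall>x. H i j = Some x \<longrightarrow> x \<noteq> 0 \<and> \<bar>x\<bar> \<le> int (n * k))
   \<and> (\<forall>i<m. card {j. j < n \<and> H i j \<noteq> None} = s)
   \<and> (\<forall>j<n. card {i. i < m \<and> H i j \<noteq> None} = k)
   \<and> inj_on (\<lambda>(i, j). \<bar>the (H i j)\<bar>) {(i, j). i < m \<and> j < n \<and> H i j \<noteq> None}
   \<and> (\<forall>i<m. (\<Sum>j<n. cellval (H i j)) = 0)
   \<and> (\<forall>j<n. (\<Sum>i<m. cellval (H i j)) = 0)"

end

theory Submission
  imports Defs
begin

definition sf :: "nat \<Rightarrow> nat \<Rightarrow> nat \<Rightarrow> nat" where
  "sf c t u = (if t \<le> u then u - t else u + c - t)"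

lemma sum_split: "(\<Sum>k<n*m::nat. f k) = (\<Sum>q<m. \<Sum>r<n. f (q*n+r))"
proof (induction m)
  case 0
  then show ?case by simp
next
  case (Suc m)
  have "(\<Sum>k<n*Suc m. f k) = (\<Sum>k<n*m. f k) + (\<Sum>k\<in>{n*m..<n*m+n}. f k)"
    by (simp add: sum.atLeastLessThan_concat[symmetric] lessThan_atLeast0 add.commute)
  also have "(\<Sum>k\<in>{n*m..<n*m+n}. f k) = (\<Sum>r<n. f (m*n+r))"
    using sum.shift_bounds_nat_ivl[of f 0 "n*m" n]
    by (simp add: lessThan_atLeast0 add.commute mult.commute)
  finally show ?case using Suc by simp
qed

lemma bij1: assumes "t < c" shows "bij_betw (\<lambda>u. sf c t u) {..<c} {..<c}"
proof (rule bij_betw_imageI)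
  show "inj_on (sf c t) {..<c}" unfolding inj_on_def sf_def using assms by auto
  show "sf c t ` {..<c} = {..<c}"
  proof
    show "sf c t ` {..<c} \<subseteq> {..<c}" unfolding sf_def using assms by auto
    show "{..<c} \<subseteq> sf c t ` {..<c}"
    proof
      fix s assume s: "s \<in> {..<c}"
      define u where "u = (if s + t < c then s + t else s + t - c)"
      have "u < c" "sf c t u = s" using s assms unfolding u_def sf_def by auto
      then show "s \<in> sf c t ` {..<c}" by force
    qed
  qed
qed

lemma bij2: assumes "u < c" shows "bij_betw (\<lambda>t. sf c t u) {..<c} {..<c}"
proof (rule bij_betw_imageI)
  show "inj_on (\<lambda>t. sf c t u) {..<c}" unfolding inj_on_def sf_def using assms by auto
  show "(\<lambda>t. sf c t u) ` {..<c} = {..<c}"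
  proof
    show "(\<lambda>t. sf c t u) ` {..<c} \<subseteq> {..<c}" unfolding sf_def using assms by auto
    show "{..<c} \<subseteq> (\<lambda>t. sf c t u) ` {..<c}"
    proof
      fix s assume s: "s \<in> {..<c}"
      define t where "t = (if s \<le> u then u - s else u + c - s)"
      have "t < c" "sf c t u = s" using s assms unfolding t_def sf_def by auto
      then show "s \<in> (\<lambda>t. sf c t u) ` {..<c}" by force
    qed
  qed
qed

lemma sum_if_less:
  fixes g :: "nat \<Rightarrow> 'a::comm_monoid_add"
  assumes "e \<le> c"
  shows "(\<Sum>s<c. if s < e then g s else 0) = (\<Sum>s<e. g s)"
proof -
  have "(\<Sum>s<c. if s < e then g s else 0) = (\<Sum>s\<in>{s\<in>{..<c}. s < e}. g s)"
    using sum.inter_filter[of "{..<c}" g "\<lambda>s. s < e"] by simp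
  also have "{s\<in>{..<c}. s < e} = {..<e}" using assms by auto
  finally show ?thesis .
qed

lemma rowsum:
  fixes f :: "nat \<Rightarrow> 'a::comm_monoid_add"
  assumes "t < c" "e \<le> c"
  shows "(\<Sum>C<b*c. if sf c t (C div b) < e then f (sf c t (C div b) * b + C mod b) else 0)
       = (\<Sum>k<b*e. f k)"
proof -
  have "(\<Sum>C<b*c. if sf c t (C div b) < e then f (sf c t (C div b) * b + C mod b) else 0)
      = (\<Sum>u<c. \<Sum>j<b. if sf c t ((u*b+j) div b) < e then f (sf c t ((u*b+j) div b) * b + (u*b+j) mod b) else 0)"
    by (rule sum_split)
  also have "\<dots> = (\<Sum>u<c. if sf c t u < e then (\<Sum>j<b. f (sf c t u * b + j)) else 0)"
    by (rule sum.cong) auto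
  also have "\<dots> = (\<Sum>s<c. if s < e then (\<Sum>j<b. f (s * b + j)) else 0)"
    using sum.reindex_bij_betw[OF bij1[OF assms(1)], of "\<lambda>s. if s < e then (\<Sum>j<b. f (s * b + j)) else 0"]
    by simp
  also have "\<dots> = (\<Sum>s<e. \<Sum>j<b. f (s * b + j))" by (rule sum_if_less[OF assms(2)])
  also have "\<dots> = (\<Sum>k<b*e. f k)" by (rule sum_split[symmetric])
  finally show ?thesis .
qed

definition HH :: "nat \<Rightarrow> nat \<Rightarrow> nat \<Rightarrow> nat \<Rightarrow> (nat \<Rightarrow> nat \<Rightarrow> nat \<Rightarrow> int) \<Rightarrow> nat \<Rightarrow> nat \<Rightarrow> int option" where
  "HH a b c e A R C = (if sf c (R div a) (C div b) < e
      then Some (A (R div a) (R mod a) (sf c (R div a) (C div b) * b + C mod b)) else None)"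

theorem lemma4p1:
  fixes a b c e :: nat
  assumes "0 < a" and "0 < b" and "0 < c" and "0 < e" and "e \<le> c"
    and "\<exists>A. IHS a (b * e) c A"
  shows "\<exists>H. Heffter (a * c) (b * c) (b * e) (a * e) H"
proof -
  obtain A where A: "IHS a (b * e) c A" using assms(6) by blast
  have bij: "bij_betw (\<lambda>(t, i, j). \<bar>A t i j\<bar>) ({..<c} \<times> {..<a} \<times> {..<b*e}) (int ` {1..a*(b*e)*c})"
    and rs: "\<And>t i. t<c \<Longrightarrow> i<a \<Longrightarrow> (\<Sum>j<b*e. A t i j) = 0"
    and cs: "\<And>t j. t<c \<Longrightarrow> j<b*e \<Longrightarrow> (\<Sum>i<a. A t i j) = 0"
    using A unfolding IHS_def by auto
  have inj: "inj_on (\<lambda>(t, i, j). \<bar>A t i j\<bar>) ({..<c} \<times> {..<a} \<times> {..<b*e})"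
    using bij bij_betw_def by blast
  have rng: "\<And>t i j. t<c \<Longrightarrow> i<a \<Longrightarrow> j<b*e \<Longrightarrow> \<bar>A t i j\<bar> \<in> int ` {1..a*(b*e)*c}"
    using bij unfolding bij_betw_def by force
  define H where "H = HH a b c e A"
  have idx: "\<And>R C. R < a*c \<Longrightarrow> C < b*c \<Longrightarrow> sf c (R div a) (C div b) < e \<Longrightarrow>
      R div a < c \<and> R mod a < a \<and> sf c (R div a) (C div b) * b + C mod b < b * e"
  proof -
    fix R C assume R: "R < a*c" and C: "C < b*c" and s: "sf c (R div a) (C div b) < e"
    have "R div a < c" using R by (simp add: less_mult_imp_div_less mult.commute)
    moreover have "R mod a < a" using assms(1) by simp
    moreover have "C mod b < b" using assms(2) by simp
    moreover have "sf c (R div a) (C div b) * b + C mod b < b * e"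
    proof -
      have "sf c (R div a) (C div b) + 1 \<le> e" using s by simp
      then have "(sf c (R div a) (C div b) + 1) * b \<le> e * b" by (rule mult_right_mono) simp
      then show ?thesis using \<open>C mod b < b\<close> by (simp add: mult.commute)
    qed
    ultimately show "R div a < c \<and> R mod a < a \<and> sf c (R div a) (C div b) * b + C mod b < b * e" by simp
  qed
  have P1: "\<forall>i<a*c. \<forall>j<b*c. \<forall>x. H i j = Some x \<longrightarrow> x \<noteq> 0 \<and> \<bar>x\<bar> \<le> int (b*c * (a*e))"
  proof (intro allI impI)
    fix R C x assume R: "R < a*c" and C: "C < b*c" and h: "H R C = Some x"
    have s: "sf c (R div a) (C div b) < e" and x: "x = A (R div a) (R mod a) (sf c (R div a) (C div b) * b + C mod b)"
      using h unfolding H_def HH_def by (auto split: if_splits)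
    have "\<bar>x\<bar> \<in> int ` {1..a*(b*e)*c}" using rng idx[OF R C s] x by simp
    then obtain y where y: "\<bar>x\<bar> = int y" "1 \<le> y" "y \<le> a*(b*e)*c" by auto
    have eq: "a*(b*e)*c = b*c*(a*e)" by simp
    have "\<bar>x\<bar> \<le> int (b*c*(a*e))" using y(1,3) eq by (metis of_nat_le_iff)
    moreover have "x \<noteq> 0" using y by auto
    ultimately show "x \<noteq> 0 \<and> \<bar>x\<bar> \<le> int (b*c * (a*e))" by simp
  qed
  have Hs: "\<And>R C. H R C \<noteq> None \<longleftrightarrow> sf c (R div a) (C div b) < e"
    unfolding H_def HH_def by simp
  have Hc: "\<And>R C. cellval (H R C) = (if sf c (R div a) (C div b) < e
      then A (R div a) (R mod a) (sf c (R div a) (C div b) * b + C mod b) else 0)"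
    unfolding H_def HH_def cellval_def by simp
  have P2: "\<forall>i<a*c. card {j. j < b*c \<and> H i j \<noteq> None} = b*e"
  proof (intro allI impI)
    fix R assume R: "R < a*c"
    have t: "R div a < c" using R by (simp add: less_mult_imp_div_less mult.commute)
    have "{j. j < b*c \<and> H R j \<noteq> None} = {C\<in>{..<b*c}. sf c (R div a) (C div b) < e}"
      using Hs by auto
    then have "card {j. j < b*c \<and> H R j \<noteq> None}
        = (\<Sum>C<b*c. if sf c (R div a) (C div b) < e then (1::nat) else 0)"
      using sum.inter_filter[of "{..<b*c}" "\<lambda>_. (1::nat)" "\<lambda>C. sf c (R div a) (C div b) < e"]
      by simp
    also have "\<dots> = (\<Sum>k<b*e. (1::nat))"
      using rowsum[OF t assms(5), of b "\<lambda>_. (1::nat)"] by simp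
    finally show "card {j. j < b*c \<and> H R j \<noteq> None} = b*e" by simp
  qed
  have P3: "\<forall>j<b*c. card {i. i < a*c \<and> H i j \<noteq> None} = a*e"
  proof (intro allI impI)
    fix C assume C: "C < b*c"
    have u: "C div b < c" using C by (simp add: less_mult_imp_div_less mult.commute)
    have "{i. i < a*c \<and> H i C \<noteq> None} = {R\<in>{..<a*c}. sf c (R div a) (C div b) < e}"
      using Hs by auto
    then have "card {i. i < a*c \<and> H i C \<noteq> None}
        = (\<Sum>R<a*c. if sf c (R div a) (C div b) < e then (1::nat) else 0)"
      using sum.inter_filter[of "{..<a*c}" "\<lambda>_. (1::nat)" "\<lambda>R. sf c (R div a) (C div b) < e"]
      by simp
    also have "\<dots> = (\<Sum>t<c. \<Sum>i<a. if sf c ((t*a+i) div a) (C div b) < e then (1::nat) else 0)"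
      by (rule sum_split)
    also have "\<dots> = (\<Sum>t<c. if sf c t (C div b) < e then a else 0)"
      by (rule sum.cong) auto
    also have "\<dots> = (\<Sum>s<c. if s < e then a else 0)"
      using sum.reindex_bij_betw[OF bij2[OF u], of "\<lambda>s. if s < e then a else 0"] by simp
    also have "\<dots> = (\<Sum>s<e. a)" by (rule sum_if_less[OF assms(5)])
    finally show "card {i. i < a*c \<and> H i C \<noteq> None} = a*e" by simp
  qed
  have P5: "\<forall>i<a*c. (\<Sum>j<b*c. cellval (H i j)) = 0"
  proof (intro allI impI)
    fix R assume R: "R < a*c"
    have t: "R div a < c" using R by (simp add: less_mult_imp_div_less mult.commute)
    have i: "R mod a < a" using assms(1) by simp
    have "(\<Sum>j<b*c. cellval (H R j)) = (\<Sum>C<b*c. if sf c (R div a) (C div b) < e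
      then A (R div a) (R mod a) (sf c (R div a) (C div b) * b + C mod b) else 0)"
      using Hc by simp
    also have "\<dots> = (\<Sum>k<b*e. A (R div a) (R mod a) k)" by (rule rowsum[OF t assms(5)])
    also have "\<dots> = 0" using rs[OF t i] .
    finally show "(\<Sum>j<b*c. cellval (H R j)) = 0" .
  qed
  have P6: "\<forall>j<b*c. (\<Sum>i<a*c. cellval (H i j)) = 0"
  proof (intro allI impI)
    fix C assume C: "C < b*c"
    have u: "C div b < c" using C by (simp add: less_mult_imp_div_less mult.commute)
    have j: "C mod b < b" using assms(2) by simp
    have "(\<Sum>i<a*c. cellval (H i C)) = (\<Sum>t<c. \<Sum>i<a. cellval (H (t*a+i) C))"
      by (rule sum_split)
    also have "\<dots> = (\<Sum>t<c. (0::int))"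
    proof (rule sum.cong)
      fix t assume t: "t \<in> {..<c}"
      have "(\<Sum>i<a. cellval (H (t*a+i) C)) = (\<Sum>i<a. if sf c t (C div b) < e
          then A t i (sf c t (C div b) * b + C mod b) else 0)"
        using Hc by (intro sum.cong) auto
      also have "\<dots> = 0"
      proof (cases "sf c t (C div b) < e")
        case True
        have "sf c t (C div b) + 1 \<le> e" using True by simp
        then have "(sf c t (C div b) + 1) * b \<le> e * b" by (rule mult_right_mono) simp
        then have "sf c t (C div b) * b + C mod b < b * e" using j by (simp add: mult.commute)
        then show ?thesis using True cs t by simp
      qed simp
      finally show "(\<Sum>i<a. cellval (H (t*a+i) C)) = 0" .
    qed simp
    finally show "(\<Sum>i<a*c. cellval (H i C)) = 0" by simp
  qed
  have P4: "inj_on (\<lambda>(i, j). \<bar>the (H i j)\<bar>) {(i, j). i < a*c \<and> j < b*c \<and> H i j \<noteq> None}"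
  proof (rule inj_onI)
    fix p q assume pS: "p \<in> {(i, j). i < a*c \<and> j < b*c \<and> H i j \<noteq> None}"
      and qS: "q \<in> {(i, j). i < a*c \<and> j < b*c \<and> H i j \<noteq> None}"
      and pq: "(\<lambda>(i, j). \<bar>the (H i j)\<bar>) p = (\<lambda>(i, j). \<bar>the (H i j)\<bar>) q"
    obtain R C where pRC: "p = (R, C)" by (cases p)
    obtain R' C' where qRC: "q = (R', C')" by (cases q)
    have R: "R < a*c" and C: "C < b*c" and N: "H R C \<noteq> None" using pS pRC by auto
    have R': "R' < a*c" and C': "C' < b*c" and N': "H R' C' \<noteq> None" using qS qRC by auto
    have eq: "\<bar>the (H R C)\<bar> = \<bar>the (H R' C')\<bar>" using pq pRC qRC by simp
    have s: "sf c (R div a) (C div b) < e" and s': "sf c (R' div a) (C' div b) < e" using N N' Hs by auto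
    have d: "R div a < c \<and> R mod a < a \<and> sf c (R div a) (C div b) * b + C mod b < b * e"
      using idx[OF R C s] .
    have d': "R' div a < c \<and> R' mod a < a \<and> sf c (R' div a) (C' div b) * b + C' mod b < b * e"
      using idx[OF R' C' s'] .
    have "\<bar>A (R div a) (R mod a) (sf c (R div a) (C div b) * b + C mod b)\<bar>
        = \<bar>A (R' div a) (R' mod a) (sf c (R' div a) (C' div b) * b + C' mod b)\<bar>"
      using eq s s' unfolding H_def HH_def by simp
    then have e3: "R div a = R' div a \<and> R mod a = R' mod a \<and>
        sf c (R div a) (C div b) * b + C mod b = sf c (R' div a) (C' div b) * b + C' mod b"
      using inj d d' unfolding inj_on_def by fastforce
    then have RR: "R = R'" by (metis div_mult_mod_eq)
    have j: "C mod b < b" "C' mod b < b" using assms(2) by auto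
    have "(sf c (R div a) (C div b) * b + C mod b) div b = sf c (R div a) (C div b)"
      using j assms(2) by simp
    moreover have "(sf c (R' div a) (C' div b) * b + C' mod b) div b = sf c (R' div a) (C' div b)"
      using j assms(2) by simp
    moreover have "(sf c (R div a) (C div b) * b + C mod b) mod b = C mod b"
      using j assms(2) by simp
    moreover have "(sf c (R' div a) (C' div b) * b + C' mod b) mod b = C' mod b"
      using j assms(2) by simp
    ultimately have m: "C mod b = C' mod b" and sfe: "sf c (R div a) (C div b) = sf c (R div a) (C' div b)"
      using e3 by metis+
    have u: "C div b < c" "C' div b < c" using C C' by (simp_all add: less_mult_imp_div_less mult.commute)
    have "C div b = C' div b" using bij1[of "R div a" c] d sfe u unfolding bij_betw_def inj_on_def by blast
    then have "C = C'" using m by (metis div_mult_mod_eq)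
    then show "p = q" using RR pRC qRC by simp
  qed
  have "Heffter (a * c) (b * c) (b * e) (a * e) H"
    unfolding Heffter_def using P1 P2 P3 P4 P5 P6 by blast
  then show ?thesis by blast
qed

end
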